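(* Let $f_2,f_3,f_4\in\mathbb{R}[x,y]$ be forms of degrees $2,3,4$, and let $t_0\neq0$ be real such that $t_0^2z^4+f_2z^2+f_3z+f_4$ is strictly positive definite. Let $\xi_0,\eta_0\in\mathbb{R}[x,y]$ be forms of degrees $2,3$ with $\eta_0^2=(f_2-t_0\xi_0)(4f_4-\xi_0^2)-f_3^2$, $f_2-t_0\xi_0$ psd and $4f_4-\xi_0^2$ psd. Assume that $\eta_0$ and $h_{t_0}(\xi_0):=3t_0\xi_0^2-2f_2\xi_0-4t_0f_4$ are relatively prime and that $f_3\neq0$. Then there exist $\epsilon>0$ and, for every $t$ with $|t-t_0|<\epsilon$, forms $\xi_t,\eta_t\in\mathbb{R}[x,y]$ of degrees $2,3$ with $(\xi_{t_0},\eta_{t_0})=(\xi_0,\eta_0)$, such that $\eta_t^2+f_3^2=(f_2-t\xi_t)(4f_4-\xi_t^2)$ and both $f_2-t\xi_t$ and $4f_4-\xi_t^2$ are psd.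
   Context: psd: taking only nonnegative values on real points; strictly positive definite: taking positive values at all nonzero real points. *)

theory Defs
  imports Complex_Main "HOL-Computational_Algebra.Polynomial_Factorial"
begin

text \<open>Bivariate real polynomials R[x,y] are represented as real poly poly:
  the outer variable is y, the inner (coefficient) variable is x.
  The coefficient of x^i y^j of p is coeff (coeff p j) i.\<close>

type_synonym bipoly = "real poly poly"

definition eval2 :: "bipoly \<Rightarrow> real \<Rightarrow> real \<Rightarrow> real" where
  "eval2 p x y = poly (poly p [:y:]) x"

definition is_form :: "nat \<Rightarrow> bipoly \<Rightarrow> bool" where
  "is_form d p \<longleftrightarrow> (\<forall>i j. coeff (coeff p j) i \<noteq> 0 \<longrightarrow> i + j = d)"

definition const2 :: "real \<Rightarrow> bipoly" where
  "const2 c = [:[:c:]:]"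

definition psd2 :: "bipoly \<Rightarrow> bool" where
  "psd2 p \<longleftrightarrow> (\<forall>x y. eval2 p x y \<ge> 0)"

end

theory Submission imports Defs "HOL-Analysis.Analysis" "HOL-Computational_Algebra.Field_as_Ring" begin

lemma poly_poly_pCons: "poly (poly p c) x = poly (poly p [:poly c x:]) x"
  by (induction p) auto

lemma eval2_expand: "eval2 p x y = (\<Sum>j\<le>degree p. \<Sum>i\<le>degree (coeff p j). coeff (coeff p j) i * x^i * y^j)"
  unfolding eval2_def
  by (simp add: poly_altdef[of p] poly_sum poly_altdef[of "coeff p _"] sum_distrib_right mult.assoc)

lemma eval2_simps[simp]:
  "eval2 (p + q) x y = eval2 p x y + eval2 q x y"
  "eval2 (p - q) x y = eval2 p x y - eval2 q x y"
  "eval2 (p * q) x y = eval2 p x y * eval2 q x y"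
  "eval2 (p ^ n) x y = eval2 p x y ^ n"
  "eval2 (const2 c) x y = c"
  "eval2 0 x y = 0"
  by (simp_all add: eval2_def const2_def poly_power)

lemma form_homog:
  assumes "is_form d p"
  shows "eval2 p (c*x) (c*y) = c^d * eval2 p x y"
proof -
  have h: "\<And>j i. coeff (coeff p j) i * (c*x)^i * (c*y)^j = c^d * (coeff (coeff p j) i * x^i * y^j)"
  proof -
    fix j i
    show "coeff (coeff p j) i * (c*x)^i * (c*y)^j = c^d * (coeff (coeff p j) i * x^i * y^j)"
    proof (cases "coeff (coeff p j) i = 0")
      case False
      then have "i + j = d" using assms unfolding is_form_def by auto
      then show ?thesis by (auto simp: power_mult_distrib power_add algebra_simps)
    qed simp
  qed
  show ?thesis unfolding eval2_expand sum_distrib_left by (intro sum.cong refl h)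
qed

lemma cont_eval2: "continuous_on S (\<lambda>z. eval2 p (fst z) (snd z))"
  unfolding eval2_expand by (intro continuous_intros)

lemma is_form_add: "is_form d p \<Longrightarrow> is_form d q \<Longrightarrow> is_form d (p + q)"
  unfolding is_form_def by (metis add.right_neutral coeff_add)
lemma is_form_diff: "is_form d p \<Longrightarrow> is_form d q \<Longrightarrow> is_form d (p - q)"
  unfolding is_form_def by (metis diff_zero coeff_diff)
lemma is_form_const: "is_form 0 (const2 c)"
  unfolding is_form_def const2_def by (auto simp: coeff_pCons split: nat.splits)
lemma is_form_0: "is_form d 0"
  unfolding is_form_def by simp

lemma coeff2_mult: "coeff (coeff (p * q) j) i =
   (\<Sum>a\<le>j. \<Sum>b\<le>i. coeff (coeff p a) b * coeff (coeff q (j - a)) (i - b))"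
  by (simp add: coeff_mult coeff_sum)

lemma is_form_mult: "is_form d p \<Longrightarrow> is_form e q \<Longrightarrow> n = d + e \<Longrightarrow> is_form n (p * q)"
  unfolding is_form_def coeff2_mult
proof (intro allI impI)
  fix i j
  assume p: "\<forall>i j. coeff (coeff p j) i \<noteq> 0 \<longrightarrow> i + j = d"
    and q: "\<forall>i j. coeff (coeff q j) i \<noteq> 0 \<longrightarrow> i + j = e" and n: "n = d + e"
    and ne: "(\<Sum>a\<le>j. \<Sum>b\<le>i. coeff (coeff p a) b * coeff (coeff q (j - a)) (i - b)) \<noteq> 0"
  then obtain a b where ab: "a \<le> j" "b \<le> i" "coeff (coeff p a) b * coeff (coeff q (j - a)) (i - b) \<noteq> 0"
    by (metis (no_types, lifting) atMost_iff sum.neutral)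
  then have "b + a = d" "(i - b) + (j - a) = e" using p q by auto
  then show "i + j = n" using ab n by linarith
qed

lemma is_form_1: "is_form 0 1"
  using is_form_const[of 1] by (simp add: const2_def one_pCons)

lemma is_form_power: "is_form d p \<Longrightarrow> is_form (n*d) (p ^ n)"
  by (induction n) (auto intro: is_form_mult is_form_1)

lemma form_zero_from_coeffs:
  assumes "is_form d p" "\<And>k. k \<le> d \<Longrightarrow> coeff (coeff p k) (d - k) = 0"
  shows "p = 0"
proof -
  have "coeff (coeff p j) i = 0" for i j
  proof (rule ccontr)
    assume h: "coeff (coeff p j) i \<noteq> 0"
    then have "i + j = d" using assms(1) unfolding is_form_def by auto
    then show False using assms(2)[of j] h by (metis add_diff_cancel_right' le_add2)
  qed
  then show ?thesis by (intro poly_eqI) (simp add: poly_eqI)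
qed

lemma sum_delta0: fixes n :: nat shows "(\<Sum>i\<le>n. c i * (if i = 0 then 1 else 0)) = (c 0::real)"
  by (induction n) auto

lemma root_dvd1:
  assumes "is_form d p" "eval2 p u1 u2 = 0" "u1 \<noteq> 0"
  shows "[:- [:0, u2/u1:], 1:] dvd p"
proof -
  define s where "s = u2/u1"
  have "eval2 p u1 u2 = u1^d * eval2 p 1 s"
    using form_homog[OF assms(1), of u1 1 s] assms(3) by (simp add: s_def)
  then have z: "eval2 p 1 s = 0" using assms by simp
  have "poly (poly p [:0,s:]) x = 0" for x
  proof -
    have "poly (poly p [:0,s:]) x = eval2 p (x * 1) (x * s)"
      unfolding eval2_def by (subst poly_poly_pCons) (simp add: mult.commute)
    also have "\<dots> = 0" using form_homog[OF assms(1), of x 1 s] z by simp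
    finally show ?thesis .
  qed
  then have "poly p [:0,s:] = 0" using poly_all_0_iff_0 by blast
  then show ?thesis using poly_eq_0_iff_dvd s_def by blast
qed

lemma root_dvd2:
  assumes "is_form d p" "eval2 p 0 u2 = 0" "u2 \<noteq> 0"
  shows "[:[:0, 1:]:] dvd p"
proof -
  have "eval2 p 0 u2 = u2^d * eval2 p 0 1"
    using form_homog[OF assms(1), of u2 0 1] by simp
  then have z: "eval2 p 0 1 = 0" using assms by simp
  have g: "coeff (coeff p j) 0 = (if j = d then coeff (coeff p d) 0 else 0)" for j
  proof (cases "j = d")
    case False
    then show ?thesis using assms(1) unfolding is_form_def by fastforce
  qed simp
  have "eval2 p 0 1 = (\<Sum>j\<le>degree p. coeff (coeff p j) 0)"
    unfolding eval2_expand by (simp add: power_0_left sum_delta0)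
  also have "\<dots> = (\<Sum>j\<le>degree p. if j = d then coeff (coeff p d) 0 else 0)"
    by (intro sum.cong refl g)
  also have "\<dots> = coeff (coeff p d) 0"
  proof (cases "d \<le> degree p")
    case False
    then have "coeff p d = 0" by (simp add: coeff_eq_0)
    then show ?thesis by simp
  qed simp
  finally have "coeff (coeff p d) 0 = 0" using z by simp
  then have c0: "coeff (coeff p j) 0 = 0" for j using g[of j] by metis
  have "[:-0, 1:] dvd coeff p n" for n
    unfolding poly_eq_0_iff_dvd[symmetric] poly_0_coeff_0 using c0 by simp
  then show ?thesis by (simp add: const_poly_dvd_iff)
qed

lemma not_unit1: "\<not> is_unit [:[:0, 1::real:]:]"
proof
  assume "is_unit [:[:0, 1::real:]:]"
  then have "is_unit [:0, 1::real:]" by (simp add: is_unit_const_poly_iff)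
  then show False by (simp add: is_unit_const_poly_iff is_unit_poly_iff)
qed

lemma not_unit2: "\<not> is_unit [:- c, 1::real poly:]"
proof
  assume "is_unit [:- c, 1::real poly:]"
  then obtain a where "[:- c, 1::real poly:] = [:a:]" unfolding is_unit_poly_iff by blast
  then show False by simp
qed

lemma common_zero_not_coprime:
  assumes "is_form d p" "is_form e q" "eval2 p u1 u2 = 0" "eval2 q u1 u2 = 0" "(u1,u2) \<noteq> (0,0)"
  shows "\<not> coprime p q"
proof (cases "u1 = 0")
  case True
  then have "u2 \<noteq> 0" using assms by auto
  moreover have "eval2 p 0 u2 = 0" "eval2 q 0 u2 = 0" using assms True by auto
  ultimately have "[:[:0, 1:]:] dvd p" "[:[:0, 1:]:] dvd q"
    using root_dvd2[OF assms(1)] root_dvd2[OF assms(2)] by auto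
  then show ?thesis using not_coprimeI not_unit1 by blast
next
  case False
  then have "[:- [:0, u2/u1:], 1:] dvd p" "[:- [:0, u2/u1:], 1:] dvd q"
    using root_dvd1[OF assms(1)] root_dvd1[OF assms(2)] assms(3,4) by auto
  then show ?thesis using not_coprimeI not_unit2 by blast
qed

lemma form_degree:
  assumes "is_form d p" "p \<noteq> 0"
  shows "degree p + degree (lead_coeff p) = d"
proof -
  have "lead_coeff p \<noteq> 0" using assms by simp
  then have "coeff (lead_coeff p) (degree (lead_coeff p)) \<noteq> 0" by simp
  then show ?thesis using assms(1) unfolding is_form_def by fastforce
qed

lemma form_dvd_small:
  assumes "is_form 2 \<xi>" "is_form 3 \<eta>" "\<eta> \<noteq> 0" "\<eta> dvd \<xi>"
  shows "\<xi> = 0"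
proof (rule ccontr)
  assume ne: "\<xi> \<noteq> 0"
  obtain q where q: "\<xi> = \<eta> * q" using assms(4) by blast
  then have "q \<noteq> 0" using ne by auto
  then have "degree \<xi> = degree \<eta> + degree q" 
    using q assms(3) by (simp_all add: degree_mult_eq)
  moreover have "lead_coeff \<xi> = lead_coeff \<eta> * lead_coeff q"
    using q by (simp only: lead_coeff_mult)
  moreover have "degree (lead_coeff \<eta> * lead_coeff q) = degree (lead_coeff \<eta>) + degree (lead_coeff q)"
    using \<open>q \<noteq> 0\<close> assms(3) by (simp add: degree_mult_eq)
  ultimately show False using form_degree[OF assms(1) ne] form_degree[OF assms(2,3)] by simp
qed


definition mk2 :: "real \<times> real \<times> real \<Rightarrow> bipoly" where
  "mk2 v = (case v of (a,b,c) \<Rightarrow> [:[:0,0,a:], [:0,b:], [:c:]:])"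
definition mk3 :: "real \<times> real \<times> real \<times> real \<Rightarrow> bipoly" where
  "mk3 v = (case v of (a,b,c,d) \<Rightarrow> [:[:0,0,0,a:], [:0,0,b:], [:0,c:], [:d:]:])"

lemma coeff_mk2: "coeff (coeff (mk2 (a,b,c)) j) i =
  (if j = 0 \<and> i = 2 then a else if j = 1 \<and> i = 1 then b else if j = 2 \<and> i = 0 then c else 0)"
  unfolding mk2_def
  by (auto simp: coeff_pCons numeral_2_eq_2 split: nat.splits)

lemma coeff_mk3: "coeff (coeff (mk3 (a,b,c,d)) j) i =
  (if j = 0 \<and> i = 3 then a else if j = 1 \<and> i = 2 then b else if j = 2 \<and> i = 1 then c
   else if j = 3 \<and> i = 0 then d else 0)"
  unfolding mk3_def
  by (auto simp: coeff_pCons numeral_2_eq_2 numeral_3_eq_3 split: nat.splits)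

lemma coeff_const2: "coeff (coeff (const2 c) j) i = (if j = 0 \<and> i = 0 then c else 0)"
  unfolding const2_def by (auto simp: coeff_pCons split: nat.splits)

lemma is_form_mk2: "is_form 2 (mk2 v)"
  by (cases v) (auto simp: is_form_def coeff_mk2 split: if_splits)
lemma is_form_mk3: "is_form 3 (mk3 v)"
  by (cases v) (auto simp: is_form_def coeff_mk3 split: if_splits)

lemma mk2_form:
  assumes "is_form 2 p"
  shows "p = mk2 (coeff (coeff p 0) 2, coeff (coeff p 1) 1, coeff (coeff p 2) 0)"
proof (intro poly_eqI)
  fix j i
  show "coeff (coeff p j) i = coeff (coeff (mk2 (coeff (coeff p 0) 2, coeff (coeff p 1) 1, coeff (coeff p 2) 0)) j) i"
  proof (cases "coeff (coeff p j) i = 0")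
    case True
    then show ?thesis unfolding coeff_mk2 by auto
  next
    case False
    then have "i + j = 2" using assms unfolding is_form_def by auto
    then have "(j = 0 \<and> i = 2) \<or> (j = 1 \<and> i = 1) \<or> (j = 2 \<and> i = 0)" by auto
    then show ?thesis unfolding coeff_mk2 by auto
  qed
qed

lemma mk3_form:
  assumes "is_form 3 p"
  shows "p = mk3 (coeff (coeff p 0) 3, coeff (coeff p 1) 2, coeff (coeff p 2) 1, coeff (coeff p 3) 0)"
proof (intro poly_eqI)
  fix j i
  show "coeff (coeff p j) i = coeff (coeff (mk3 (coeff (coeff p 0) 3, coeff (coeff p 1) 2, coeff (coeff p 2) 1, coeff (coeff p 3) 0)) j) i"
  proof (cases "coeff (coeff p j) i = 0")
    case True
    then show ?thesis unfolding coeff_mk3 by auto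
  next
    case False
    then have "i + j = 3" using assms unfolding is_form_def by auto
    then have "(j = 0 \<and> i = 3) \<or> (j = 1 \<and> i = 2) \<or> (j = 2 \<and> i = 1) \<or> (j = 3 \<and> i = 0)" by auto
    then show ?thesis unfolding coeff_mk3 by auto
  qed
qed

lemma mk2_eq0: assumes "mk2 v = 0" shows "v = 0"
proof -
  obtain a b c where v: "v = (a,b,c)" by (cases v) auto
  have "coeff (coeff (mk2 (a,b,c)) 0) 2 = 0" "coeff (coeff (mk2 (a,b,c)) 1) 1 = 0" "coeff (coeff (mk2 (a,b,c)) 2) 0 = 0"
    using assms v by simp_all
  then show ?thesis unfolding coeff_mk2 using v by (simp add: zero_prod_def)
qed

lemma mk3_eq0: assumes "mk3 v = 0" shows "v = 0"
proof -
  obtain a b c d where v: "v = (a,b,c,d)" by (cases v) auto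
  have "coeff (coeff (mk3 (a,b,c,d)) 0) 3 = 0" "coeff (coeff (mk3 (a,b,c,d)) 1) 2 = 0"
     "coeff (coeff (mk3 (a,b,c,d)) 2) 1 = 0" "coeff (coeff (mk3 (a,b,c,d)) 3) 0 = 0"
    using assms v by simp_all
  then show ?thesis unfolding coeff_mk3 using v by (simp add: zero_prod_def)
qed

definition bd :: "('a::real_normed_vector \<Rightarrow> bipoly) \<Rightarrow> ('a \<Rightarrow> bipoly) \<Rightarrow> 'a \<Rightarrow> bool" where
  "bd M M' w \<longleftrightarrow> (\<forall>j i. ((\<lambda>v. coeff (coeff (M v) j) i) has_derivative (\<lambda>h. coeff (coeff (M' h) j) i)) (at w))"

lemma bd_const: "bd (\<lambda>v. P) (\<lambda>h. 0) w"
  unfolding bd_def by simp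

lemma bd_add: "bd M M' w \<Longrightarrow> bd N N' w \<Longrightarrow> bd (\<lambda>v. M v + N v) (\<lambda>h. M' h + N' h) w"
  unfolding bd_def by (auto intro: has_derivative_add)

lemma bd_diff: "bd M M' w \<Longrightarrow> bd N N' w \<Longrightarrow> bd (\<lambda>v. M v - N v) (\<lambda>h. M' h - N' h) w"
  unfolding bd_def by (auto intro: has_derivative_diff)

lemma sum_sum_mult_deriv:
  fixes X Y :: "nat \<Rightarrow> nat \<Rightarrow> 'a::real_normed_vector \<Rightarrow> real"
  assumes "\<And>a b. (X a b has_derivative X' a b) (at w)" "\<And>a b. (Y a b has_derivative Y' a b) (at w)"
  shows "((\<lambda>v. \<Sum>a\<le>j. \<Sum>b\<le>i. X a b v * Y a b v) has_derivative
          (\<lambda>h. \<Sum>a\<le>j. \<Sum>b\<le>i. X a b w * Y' a b h + X' a b h * Y a b w)) (at w)"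
  by (intro has_derivative_sum has_derivative_mult assms)

lemma bd_mult: "bd M M' w \<Longrightarrow> bd N N' w \<Longrightarrow> bd (\<lambda>v. M v * N v) (\<lambda>h. M' h * N w + M w * N' h) w"
  unfolding bd_def coeff2_mult coeff_add
  apply (intro allI)
  apply (rule has_derivative_eq_rhs)
   apply (rule sum_sum_mult_deriv[where X="\<lambda>a b v. coeff (coeff (M v) a) b" and Y="\<lambda>a b v. coeff (coeff (N v) (_ - a)) (_ - b)"])
    apply blast
   apply blast
  apply (simp add: sum.distrib algebra_simps)
  done

type_synonym V = "real \<times> (real \<times> real \<times> real) \<times> (real \<times> real \<times> real \<times> real)"

lemma coeff_mk2': "coeff (coeff (mk2 v) j) i =
  (if j = 0 \<and> i = 2 then fst v else if j = 1 \<and> i = 1 then fst (snd v) else if j = 2 \<and> i = 0 then snd (snd v) else 0)"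
  by (cases v) (simp add: coeff_mk2)

lemma coeff_mk3': "coeff (coeff (mk3 v) j) i =
  (if j = 0 \<and> i = 3 then fst v else if j = 1 \<and> i = 2 then fst (snd v) else if j = 2 \<and> i = 1 then fst (snd (snd v))
   else if j = 3 \<and> i = 0 then snd (snd (snd v)) else 0)"
  by (cases v) (simp add: coeff_mk3)

lemma bd_cong: "bd M M1 w \<Longrightarrow> (\<And>h. M1 h = M2 h) \<Longrightarrow> bd M M2 w"
proof -
  assume a: "bd M M1 w" "\<And>h. M1 h = M2 h"
  then have "M1 = M2" by (intro ext)
  then show ?thesis using a(1) by simp
qed

lemma has_derivative_if_const:
  "(f has_derivative f') F \<Longrightarrow> (g has_derivative g') F \<Longrightarrow>
   ((\<lambda>v. if C then f v else g v) has_derivative (\<lambda>h. if C then f' h else g' h)) F"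
  by (cases C) auto

lemma bd_t: "bd (\<lambda>v::V. const2 (fst v)) (\<lambda>h. const2 (fst h)) w"
  unfolding bd_def coeff_const2
  by (intro allI has_derivative_if_const derivative_intros)

lemma bd_xi: "bd (\<lambda>v::V. mk2 (fst (snd v))) (\<lambda>h. mk2 (fst (snd h))) w"
  unfolding bd_def coeff_mk2'
  by (intro allI has_derivative_if_const derivative_intros)

lemma bd_eta: "bd (\<lambda>v::V. mk3 (snd (snd v))) (\<lambda>h. mk3 (snd (snd h))) w"
  unfolding bd_def coeff_mk3'
  by (intro allI has_derivative_if_const derivative_intros)

definition xi :: "V \<Rightarrow> bipoly" where "xi v = mk2 (fst (snd v))"
definition eta :: "V \<Rightarrow> bipoly" where "eta v = mk3 (snd (snd v))"

definition Emap :: "bipoly \<Rightarrow> bipoly \<Rightarrow> bipoly \<Rightarrow> V \<Rightarrow> bipoly" where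
  "Emap f2 f3 f4 v = eta v * eta v + f3 * f3 - (f2 - const2 (fst v) * xi v) * (const2 4 * f4 - xi v * xi v)"

definition Ederiv :: "bipoly \<Rightarrow> bipoly \<Rightarrow> bipoly \<Rightarrow> V \<Rightarrow> V \<Rightarrow> bipoly" where
  "Ederiv f2 f3 f4 w h = 2 * eta w * eta h + (const2 (fst h) * xi w + const2 (fst w) * xi h) * (const2 4 * f4 - xi w * xi w)
     + 2 * (f2 - const2 (fst w) * xi w) * xi w * xi h"

lemma bd_E: "bd (Emap f2 f3 f4) (Ederiv f2 f3 f4 w) w"
  unfolding Emap_def[abs_def] Ederiv_def xi_def eta_def
  apply (rule bd_cong)
   apply (rule bd_add bd_diff bd_mult bd_t bd_xi bd_eta bd_const)+
  apply algebra
  done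

definition Gmap :: "bipoly \<Rightarrow> bipoly \<Rightarrow> bipoly \<Rightarrow> V \<Rightarrow> V" where
  "Gmap f2 f3 f4 v = (let c = (\<lambda>k. coeff (coeff (Emap f2 f3 f4 v) k) (6 - k)) in
     (fst v, (c 0, c 1, c 2), (c 3, c 4, c 5, c 6)))"

definition Lmap :: "bipoly \<Rightarrow> bipoly \<Rightarrow> bipoly \<Rightarrow> V \<Rightarrow> V \<Rightarrow> V" where
  "Lmap f2 f3 f4 w h = (let c = (\<lambda>k. coeff (coeff (Ederiv f2 f3 f4 w h) k) (6 - k)) in
     (fst h, (c 0, c 1, c 2), (c 3, c 4, c 5, c 6)))"

lemma G_deriv: "(Gmap f2 f3 f4 has_derivative Lmap f2 f3 f4 w) (at w)"
proof -
  have d: "\<And>k. ((\<lambda>v. coeff (coeff (Emap f2 f3 f4 v) k) (6 - k)) has_derivative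
     (\<lambda>h. coeff (coeff (Ederiv f2 f3 f4 w h) k) (6 - k))) (at w)"
    using bd_E[of f2 f3 f4 w] unfolding bd_def by blast
  show ?thesis unfolding Gmap_def[abs_def] Lmap_def[abs_def] Let_def
    by (intro has_derivative_Pair d derivative_intros)
qed

lemma const2_mult: "const2 (a * b) = const2 a * const2 b"
  unfolding const2_def by simp
lemma const2_0: "const2 0 = 0"
  unfolding const2_def by simp
lemma const2_numeral: "const2 (numeral n) = numeral n"
  unfolding const2_def by (simp add: numeral_poly)

lemma le6_cases: "(k::nat) \<le> 6 \<Longrightarrow> k = 0 \<or> k = 1 \<or> k = 2 \<or> k = 3 \<or> k = 4 \<or> k = 5 \<or> k = 6"
  by arith

lemma is_form_Emap:
  assumes "is_form 2 f2" "is_form 3 f3" "is_form 4 f4"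
  shows "is_form 6 (Emap f2 f3 f4 v)"
  unfolding Emap_def xi_def eta_def
  by (intro is_form_add is_form_diff is_form_mult[OF is_form_mk3 is_form_mk3]
        is_form_mult[OF assms(2) assms(2)]
        is_form_mult[OF is_form_diff[OF assms(1) is_form_mult[OF is_form_const is_form_mk2]]
          is_form_diff[OF is_form_mult[OF is_form_const assms(3)] is_form_mult[OF is_form_mk2 is_form_mk2]]]) auto

lemma is_form_numeral: "is_form 0 (numeral n :: bipoly)"
  using is_form_const[of "numeral n"] by (simp add: const2_numeral)

lemma is_form_Ederiv:
  assumes "is_form 2 f2" "is_form 3 f3" "is_form 4 f4"
  shows "is_form 6 (Ederiv f2 f3 f4 w h)"
proof -
  have A: "is_form 2 (f2 - const2 (fst w) * xi w)"
    unfolding xi_def by (intro is_form_diff[OF assms(1) is_form_mult[OF is_form_const is_form_mk2]]) auto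
  have B: "is_form 4 (const2 4 * f4 - xi w * xi w)"
    unfolding xi_def by (intro is_form_diff[OF is_form_mult[OF is_form_const assms(3)] is_form_mult[OF is_form_mk2 is_form_mk2]]) auto
  have C: "is_form 2 (const2 (fst h) * xi w + const2 (fst w) * xi h)"
    unfolding xi_def by (intro is_form_add is_form_mult[OF is_form_const is_form_mk2]) auto
  have 1: "is_form 6 (2 * eta w * eta h)"
    unfolding eta_def by (intro is_form_mult[OF is_form_mult[OF is_form_numeral is_form_mk3] is_form_mk3]) auto
  have 2: "is_form 6 ((const2 (fst h) * xi w + const2 (fst w) * xi h) * (const2 4 * f4 - xi w * xi w))"
    by (rule is_form_mult[OF C B]) auto
  have 3: "is_form 6 (2 * (f2 - const2 (fst w) * xi w) * xi w * xi h)"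
    unfolding xi_def by (intro is_form_mult[OF is_form_mult[OF is_form_mult[OF is_form_numeral A[unfolded xi_def]] is_form_mk2] is_form_mk2]) auto
  show ?thesis unfolding Ederiv_def by (intro is_form_add 1 2 3)
qed

lemma Lmap_inj:
  assumes f: "is_form 2 f2" "is_form 3 f3" "is_form 4 f4"
    and w0: "fst w0 = t0" "xi w0 = \<xi>0" "eta w0 = \<eta>0" "\<eta>0 \<noteq> 0"
    and cp: "coprime \<eta>0 (const2 (3 * t0) * \<xi>0\<^sup>2 - const2 2 * f2 * \<xi>0 - const2 (4 * t0) * f4)"
    and L: "Lmap f2 f3 f4 w0 h = 0"
  shows "h = 0"
proof -
  have h1: "fst h = 0" using L unfolding Lmap_def Let_def by (simp add: zero_prod_def)
  have "coeff (coeff (Ederiv f2 f3 f4 w0 h) k) (6 - k) = 0" if "k \<le> 6" for k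
    using L le6_cases[OF that] unfolding Lmap_def Let_def by (auto simp: zero_prod_def)
  then have E0: "Ederiv f2 f3 f4 w0 h = 0"
    by (intro form_zero_from_coeffs[OF is_form_Ederiv[OF f]])
  define H where "H = const2 (3 * t0) * \<xi>0\<^sup>2 - const2 2 * f2 * \<xi>0 - const2 (4 * t0) * f4"
  have "Ederiv f2 f3 f4 w0 h = 2 * \<eta>0 * eta h - xi h * H"
    unfolding Ederiv_def H_def h1 w0 const2_0 const2_mult const2_numeral by algebra
  then have eq: "2 * \<eta>0 * eta h = xi h * H" using E0 by simp
  have "\<eta>0 dvd xi h * H" unfolding eq[symmetric] by simp
  moreover have "coprime \<eta>0 H" using cp unfolding H_def .
  ultimately have "\<eta>0 dvd xi h" using coprime_dvd_mult_left_iff[of \<eta>0 H "xi h"] by simp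
  then have x0: "xi h = 0"
    using form_dvd_small[of "xi h" \<eta>0] is_form_mk2 w0 is_form_mk3 unfolding xi_def eta_def by metis
  then have "2 * \<eta>0 * eta h = 0" using eq by simp
  then have "eta h = 0" using w0(4) by simp
  then have "snd (snd h) = 0" "fst (snd h) = 0" using x0 mk2_eq0 mk3_eq0 unfolding xi_def eta_def by auto
  then show ?thesis using h1 by (simp add: prod_eq_iff)
qed

lemma eval2_mk2: "eval2 (mk2 v) x y = fst v * x^2 + fst (snd v) * x * y + snd (snd v) * y^2"
  by (cases v) (simp add: eval2_def mk2_def algebra_simps power2_eq_square)

lemma eval2_mk3: "eval2 (mk3 v) x y = fst v * x^3 + fst (snd v) * x^2 * y + fst (snd (snd v)) * x * y^2 + snd (snd (snd v)) * y^3"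
  by (cases v) (simp add: eval2_def mk3_def algebra_simps power2_eq_square power3_eq_cube)

lemma cont_eval2' [continuous_intros]:
  "continuous_on S g1 \<Longrightarrow> continuous_on S g2 \<Longrightarrow> continuous_on S (\<lambda>z. eval2 p (g1 z) (g2 z))"
  unfolding eval2_expand by (intro continuous_intros)

lemma psd_sphere:
  assumes "is_form d p" "\<And>x y. x^2 + y^2 = 1 \<Longrightarrow> eval2 p x y \<ge> 0"
  shows "psd2 p"
  unfolding psd2_def
proof (intro allI)
  fix x y :: real
  define r where "r = sqrt (x^2 + y^2)"
  show "eval2 p x y \<ge> 0"
  proof (cases "r = 0")
    case True
    then have "x = 0" "y = 0" unfolding r_def by (auto simp: power2_eq_square add_nonneg_eq_0_iff)
    then have "eval2 p x y = 0^d * eval2 p 1 0" using form_homog[OF assms(1), of 0 1 0] by simp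
    also have "\<dots> \<ge> 0" using assms(2)[of 1 0] by simp
    finally show ?thesis .
  next
    case False
    moreover have "r \<ge> 0" unfolding r_def by simp
    ultimately have r: "r > 0" by simp
    have r2: "r^2 = x^2 + y^2" unfolding r_def by simp
    have "(x/r)^2 + (y/r)^2 = (x^2 + y^2) / r^2" by (simp add: power_divide add_divide_distrib)
    also have "\<dots> = 1" using r r2 by (metis divide_self power_not_zero less_irrefl)
    finally have "(x/r)^2 + (y/r)^2 = 1" .
    then have "eval2 p (x/r) (y/r) \<ge> 0" by (rule assms(2))
    moreover have "eval2 p x y = r^d * eval2 p (x/r) (y/r)"
      using form_homog[OF assms(1), of r "x/r" "y/r"] r by simp
    ultimately show ?thesis using r by simp
  qed
qed

lemma prod_sum_pos: "(a::real) * b \<ge> 0 \<Longrightarrow> a + b > 0 \<Longrightarrow> a \<ge> 0 \<and> b \<ge> 0"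
proof (rule ccontr)
  assume h: "a * b \<ge> 0" "a + b > 0" "\<not> (a \<ge> 0 \<and> b \<ge> 0)"
  show False
  proof (cases "a < 0")
    case True
    then have "b > 0" using h by linarith
    then have "a * b < 0" using True by (simp add: mult_neg_pos)
    then show False using h by linarith
  next
    case False
    then have "b < 0" "a > 0" using h by linarith+
    then have "a * b < 0" by (simp add: mult_pos_neg)
    then show False using h by linarith
  qed
qed

lemma is_form_H:
  assumes "is_form 2 f2" "is_form 4 f4" "is_form 2 \<xi>0"
  shows "is_form 4 (const2 (3 * t0) * \<xi>0\<^sup>2 - const2 2 * f2 * \<xi>0 - const2 (4 * t0) * f4)"
  by (intro is_form_diff is_form_mult[OF is_form_const is_form_power[OF assms(3)]]
      is_form_mult[OF is_form_mult[OF is_form_const assms(1)] assms(3)] is_form_mult[OF is_form_const assms(2)]) auto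

lemma pos_at_w0:
  assumes f: "is_form 2 f2" "is_form 3 f3" "is_form 4 f4"
    and "is_form 2 \<xi>0" "is_form 3 \<eta>0"
    and eq: "\<eta>0\<^sup>2 = (f2 - const2 t0 * \<xi>0) * (const2 4 * f4 - \<xi>0\<^sup>2) - f3\<^sup>2"
    and pA: "psd2 (f2 - const2 t0 * \<xi>0)" and pB: "psd2 (const2 4 * f4 - \<xi>0\<^sup>2)"
    and cp: "coprime \<eta>0 (const2 (3 * t0) * \<xi>0\<^sup>2 - const2 2 * f2 * \<xi>0 - const2 (4 * t0) * f4)"
    and u: "x^2 + y^2 = 1"
  shows "eval2 (f2 - const2 t0 * \<xi>0) x y + eval2 (const2 4 * f4 - \<xi>0\<^sup>2) x y > 0"
proof (rule ccontr)
  assume np: "\<not> ?thesis"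
  define a where "a = eval2 (f2 - const2 t0 * \<xi>0) x y"
  define b where "b = eval2 (const2 4 * f4 - \<xi>0\<^sup>2) x y"
  have "a \<ge> 0" "b \<ge> 0" using pA pB unfolding psd2_def a_def b_def by auto
  then have a0: "a = 0" and b0: "b = 0" using np unfolding a_def[symmetric] b_def[symmetric] by auto
  have "eval2 (\<eta>0\<^sup>2) x y = eval2 ((f2 - const2 t0 * \<xi>0) * (const2 4 * f4 - \<xi>0\<^sup>2) - f3\<^sup>2) x y"
    using eq by simp
  then have "(eval2 \<eta>0 x y)^2 = a * b - (eval2 f3 x y)^2" unfolding a_def b_def by simp
  then have "(eval2 \<eta>0 x y)^2 + (eval2 f3 x y)^2 = 0" using a0 by simp
  then have e0: "eval2 \<eta>0 x y = 0" by (simp add: add_nonneg_eq_0_iff)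
  have "eval2 f2 x y = t0 * eval2 \<xi>0 x y" using a0 unfolding a_def by simp
  moreover have "4 * eval2 f4 x y = (eval2 \<xi>0 x y)^2" using b0 unfolding b_def by simp
  ultimately have h0: "eval2 (const2 (3 * t0) * \<xi>0\<^sup>2 - const2 2 * f2 * \<xi>0 - const2 (4 * t0) * f4) x y = 0"
    by (simp add: algebra_simps power2_eq_square)
  have "(x, y) \<noteq> (0, 0)" using u by auto
  then have "\<not> coprime \<eta>0 (const2 (3 * t0) * \<xi>0\<^sup>2 - const2 2 * f2 * \<xi>0 - const2 (4 * t0) * f4)"
    by (intro common_zero_not_coprime[OF assms(5) is_form_H[OF f(1) f(3) assms(4)] e0 h0])
  then show False using cp by simp
qed

definition Ps :: "bipoly \<Rightarrow> bipoly \<Rightarrow> V \<times> (real \<times> real) \<Rightarrow> real" where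
  "Ps f2 f4 p = eval2 (f2 - const2 (fst (fst p)) * xi (fst p)) (fst (snd p)) (snd (snd p))
     + eval2 (const2 4 * f4 - xi (fst p) * xi (fst p)) (fst (snd p)) (snd (snd p))"

lemma cont_Ps: "continuous_on S (Ps f2 f4)"
  unfolding Ps_def[abs_def] xi_def eval2_simps eval2_mk2 by (intro continuous_intros)

lemma eta0_ne:
  assumes "is_form 4 H" "coprime \<eta>0 H"
  shows "\<eta>0 \<noteq> 0"
proof
  assume "\<eta>0 = 0"
  then have "is_unit H" using assms(2) by simp
  then obtain c where c: "H = [:c:]" "is_unit c" unfolding is_unit_poly_iff by blast
  then obtain d where d: "c = [:d:]" "is_unit d" unfolding is_unit_poly_iff by blast
  then have "d \<noteq> 0" by auto
  then have "coeff (coeff H 0) 0 \<noteq> 0" using c d by simp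
  then show False using assms(1) unfolding is_form_def by fastforce
qed

lemma uc_step:
  fixes P :: "V \<times> (real \<times> real) \<Rightarrow> real" and w0 :: V
  assumes "continuous_on UNIV P" "m > 0" "\<And>u. u \<in> sphere 0 1 \<Longrightarrow> P (w0, u) \<ge> m"
  shows "\<exists>\<delta>>0. \<forall>w u. dist w w0 < \<delta> \<longrightarrow> u \<in> sphere 0 1 \<longrightarrow> P (w, u) > 0"
proof -
  have "compact (cball w0 1 \<times> sphere (0::real\<times>real) 1)" by (intro compact_Times compact_cball compact_sphere)
  then have "uniformly_continuous_on (cball w0 1 \<times> sphere (0::real\<times>real) 1) P"
    using compact_uniformly_continuous continuous_on_subset[OF assms(1)] by blast
  then obtain d where d: "d > 0" "\<And>p p'. p \<in> cball w0 1 \<times> sphere 0 1 \<Longrightarrow> p' \<in> cball w0 1 \<times> sphere 0 1 \<Longrightarrow>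
      dist p' p < d \<Longrightarrow> dist (P p') (P p) < m"
    unfolding uniformly_continuous_on_def using assms(2) by metis
  show ?thesis
  proof (intro exI[of _ "min 1 d"] conjI allI impI)
    show "min 1 d > 0" using d by simp
    fix w u assume w: "dist w w0 < min 1 d" and u: "u \<in> sphere (0::real\<times>real) 1"
    have "dist (w, u) (w0, u) = dist w w0" by (simp add: dist_Pair_Pair)
    then have "dist (P (w, u)) (P (w0, u)) < m"
      using d(2)[of "(w0,u)" "(w,u)"] w u by (auto simp: dist_commute)
    then show "P (w, u) > 0" using assms(3)[OF u] by (simp add: dist_real_def)
  qed
qed

theorem proposition6p3:
  fixes f2 f3 f4 \<xi>0 \<eta>0 :: bipoly and t0 :: real
  assumes "is_form 2 f2" "is_form 3 f3" "is_form 4 f4"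
    and "t0 \<noteq> 0"
    and "\<forall>x y z. (x, y, z) \<noteq> (0, 0, 0) \<longrightarrow>
           t0\<^sup>2 * z ^ 4 + eval2 f2 x y * z\<^sup>2 + eval2 f3 x y * z + eval2 f4 x y > 0"
    and "is_form 2 \<xi>0" "is_form 3 \<eta>0"
    and "\<eta>0\<^sup>2 = (f2 - const2 t0 * \<xi>0) * (const2 4 * f4 - \<xi>0\<^sup>2) - f3\<^sup>2"
    and "psd2 (f2 - const2 t0 * \<xi>0)" "psd2 (const2 4 * f4 - \<xi>0\<^sup>2)"
    and "coprime \<eta>0 (const2 (3 * t0) * \<xi>0\<^sup>2 - const2 2 * f2 * \<xi>0 - const2 (4 * t0) * f4)"
    and "f3 \<noteq> 0"
  shows "\<exists>\<epsilon>>0. \<exists>\<xi> \<eta> :: real \<Rightarrow> bipoly. \<xi> t0 = \<xi>0 \<and> \<eta> t0 = \<eta>0 \<and>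
           (\<forall>t. \<bar>t - t0\<bar> < \<epsilon> \<longrightarrow>
              is_form 2 (\<xi> t) \<and> is_form 3 (\<eta> t) \<and>
              (\<eta> t)\<^sup>2 + f3\<^sup>2 = (f2 - const2 t * \<xi> t) * (const2 4 * f4 - (\<xi> t)\<^sup>2) \<and>
              psd2 (f2 - const2 t * \<xi> t) \<and> psd2 (const2 4 * f4 - (\<xi> t)\<^sup>2))"
proof -
  note f = assms(1-3)
  define w0 :: V where "w0 = (t0, (coeff (coeff \<xi>0 0) 2, coeff (coeff \<xi>0 1) 1, coeff (coeff \<xi>0 2) 0),
     (coeff (coeff \<eta>0 0) 3, coeff (coeff \<eta>0 1) 2, coeff (coeff \<eta>0 2) 1, coeff (coeff \<eta>0 3) 0))"
  have xw0: "xi w0 = \<xi>0" unfolding xi_def w0_def using mk2_form[OF assms(6)] by simp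
  have ew0: "eta w0 = \<eta>0" unfolding eta_def w0_def using mk3_form[OF assms(7)] by simp
  have tw0: "fst w0 = t0" unfolding w0_def by simp
  have ne: "\<eta>0 \<noteq> 0" by (rule eta0_ne[OF is_form_H[OF f(1) f(3) assms(6)] assms(11)])
  let ?G = "Gmap f2 f3 f4"
  have E0: "Emap f2 f3 f4 w0 = 0"
    using assms(8) unfolding Emap_def xw0 ew0 tw0 power2_eq_square by simp
  have G0: "?G w0 = (t0, 0)"
    unfolding Gmap_def Let_def E0 tw0 by (simp add: zero_prod_def)
  define L where "L = Lmap f2 f3 f4 w0"
  have dG: "(?G has_derivative L) (at w0)" unfolding L_def by (rule G_deriv)
  have linL: "linear L" using has_derivative_bounded_linear[OF dG] bounded_linear.linear by blast
  have "\<forall>x. L x = 0 \<longrightarrow> x = 0"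
    unfolding L_def using Lmap_inj[OF f tw0 xw0 ew0 ne assms(11)] by blast
  then have injL: "inj L" using linear_injective_0[OF linL] by blast
  have surjL: "surj L" using linear_injective_imp_surjective[OF linL injL] by simp
  define g' where "g' = inv L"
  have blg: "bounded_linear g'"
    unfolding g'_def using inj_linear_imp_inv_bounded_linear linL linear_conv_bounded_linear injL by blast
  have Lg: "L \<circ> g' = id" using surjL by (simp add: g'_def comp_def surj_f_inv_f fun_eq_iff)
  have unit_sphere: "fst u ^ 2 + snd u ^ 2 = 1" if "u \<in> sphere (0::real\<times>real) 1" for u
  proof -
    have "sqrt (fst u ^ 2 + snd u ^ 2) = 1" using that by (cases u) (simp add: norm_Pair)
    then show ?thesis by (metis real_sqrt_eq_1_iff)
  qed
  have in_sphere: "(x, y) \<in> sphere (0::real\<times>real) 1" if "x^2 + y^2 = 1" for x y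
    using that by (simp add: norm_Pair)
  have pos0: "Ps f2 f4 (w0, u) > 0" if "u \<in> sphere 0 1" for u
    using pos_at_w0[OF f assms(6,7,8,9,10,11) unit_sphere[OF that]]
    unfolding Ps_def xw0 tw0 fst_conv snd_conv power2_eq_square by simp
  have contP0: "continuous_on (sphere 0 1) (\<lambda>u. Ps f2 f4 (w0, u))"
    unfolding Ps_def xi_def eval2_simps eval2_mk2 by (intro continuous_intros)
  obtain u0 where u0: "u0 \<in> sphere (0::real\<times>real) 1" "\<And>u. u \<in> sphere 0 1 \<Longrightarrow> Ps f2 f4 (w0, u0) \<le> Ps f2 f4 (w0, u)"
    using continuous_attains_inf[OF compact_sphere _ contP0] in_sphere[of 1 0] by fastforce
  define m where "m = Ps f2 f4 (w0, u0)"
  have m: "m > 0" unfolding m_def using pos0 u0 by blast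
  obtain \<delta> where \<delta>: "\<delta> > 0" "\<And>w u. dist w w0 < \<delta> \<Longrightarrow> u \<in> sphere 0 1 \<Longrightarrow> Ps f2 f4 (w, u) > 0"
    using uc_step[OF cont_Ps m] u0 unfolding m_def by blast
  have contG: "continuous_on UNIV ?G"
    by (intro continuous_at_imp_continuous_on ballI has_derivative_continuous[OF G_deriv])
  have "?G w0 \<in> interior (?G ` ball w0 \<delta>)"
    by (rule sussmann_open_mapping[OF open_UNIV contG _ dG blg Lg]) (use \<delta> in auto)
  then obtain e where e: "e > 0" "ball (t0, 0) e \<subseteq> ?G ` ball w0 \<delta>"
    unfolding mem_interior G0 by blast
  have main: "\<exists>\<xi> \<eta>. is_form 2 \<xi> \<and> is_form 3 \<eta> \<and>
              \<eta>\<^sup>2 + f3\<^sup>2 = (f2 - const2 t * \<xi>) * (const2 4 * f4 - \<xi>\<^sup>2) \<and>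
              psd2 (f2 - const2 t * \<xi>) \<and> psd2 (const2 4 * f4 - \<xi>\<^sup>2)" if t: "\<bar>t - t0\<bar> < e" for t
  proof -
    have "dist ((t0, 0)::V) ((t, 0)::V) = \<bar>t - t0\<bar>"
      by (simp add: dist_Pair_Pair dist_real_def)
    then have "((t, 0)::V) \<in> ball ((t0, 0)::V) e" using t by simp
    then have "((t, 0)::V) \<in> ?G ` ball w0 \<delta>" using e(2) by (rule subsetD[rotated])
    then obtain w where w: "w \<in> ball w0 \<delta>" "?G w = (t, 0)" by (metis imageE)
    have wt: "fst w = t" using w(2) unfolding Gmap_def Let_def by simp
    have "coeff (coeff (Emap f2 f3 f4 w) k) (6 - k) = 0" if "k \<le> 6" for k
      using w(2) le6_cases[OF that] unfolding Gmap_def Let_def by (auto simp: zero_prod_def)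
    then have Ew: "Emap f2 f3 f4 w = 0"
      by (intro form_zero_from_coeffs[OF is_form_Emap[OF f]])
    have eq: "(eta w)\<^sup>2 + f3\<^sup>2 = (f2 - const2 t * xi w) * (const2 4 * f4 - (xi w)\<^sup>2)"
      using Ew unfolding Emap_def wt power2_eq_square by simp
    have dw: "dist w w0 < \<delta>" using w(1) by (simp add: dist_commute)
    have ab: "eval2 (f2 - const2 t * xi w) x y \<ge> 0 \<and> eval2 (const2 4 * f4 - (xi w)\<^sup>2) x y \<ge> 0"
      if "x^2 + y^2 = 1" for x y
    proof (rule prod_sum_pos)
      have "eval2 ((f2 - const2 t * xi w) * (const2 4 * f4 - (xi w)\<^sup>2)) x y = eval2 ((eta w)\<^sup>2 + f3\<^sup>2) x y"
        using eq by (rule arg_cong[where f="\<lambda>p. eval2 p x y", symmetric])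
      then have "eval2 (f2 - const2 t * xi w) x y * eval2 (const2 4 * f4 - (xi w)\<^sup>2) x y
          = (eval2 (eta w) x y)\<^sup>2 + (eval2 f3 x y)\<^sup>2"
        by (simp only: eval2_simps(1,3,4))
      then show "eval2 (f2 - const2 t * xi w) x y * eval2 (const2 4 * f4 - (xi w)\<^sup>2) x y \<ge> 0"
        by simp
      show "eval2 (f2 - const2 t * xi w) x y + eval2 (const2 4 * f4 - (xi w)\<^sup>2) x y > 0"
        using \<delta>(2)[OF dw in_sphere[OF that]] unfolding Ps_def wt fst_conv snd_conv power2_eq_square .
    qed
    have fA: "is_form 2 (f2 - const2 t * xi w)"
      unfolding xi_def by (intro is_form_diff[OF f(1) is_form_mult[OF is_form_const is_form_mk2]]) auto
    have fB: "is_form 4 (const2 4 * f4 - (xi w)\<^sup>2)"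
      unfolding xi_def by (intro is_form_diff[OF is_form_mult[OF is_form_const f(3)] is_form_power[OF is_form_mk2, of 2, simplified]]) auto
    show ?thesis
    proof (intro exI conjI)
      show "is_form 2 (xi w)" unfolding xi_def by (rule is_form_mk2)
      show "is_form 3 (eta w)" unfolding eta_def by (rule is_form_mk3)
      show "(eta w)\<^sup>2 + f3\<^sup>2 = (f2 - const2 t * xi w) * (const2 4 * f4 - (xi w)\<^sup>2)" by (rule eq)
      show "psd2 (f2 - const2 t * xi w)" by (rule psd_sphere[OF fA]) (use ab in blast)
      show "psd2 (const2 4 * f4 - (xi w)\<^sup>2)" by (rule psd_sphere[OF fB]) (use ab in blast)
    qed
  qed
  define P where "P = (\<lambda>t \<xi> \<eta>. is_form 2 \<xi> \<and> is_form 3 \<eta> \<and>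
              \<eta>\<^sup>2 + f3\<^sup>2 = (f2 - const2 t * \<xi>) * (const2 4 * f4 - \<xi>\<^sup>2) \<and>
              psd2 (f2 - const2 t * \<xi>) \<and> psd2 (const2 4 * f4 - \<xi>\<^sup>2))"
  have "\<forall>t. \<exists>p. \<bar>t - t0\<bar> < e \<longrightarrow> P t (fst p) (snd p)"
  proof
    fix t
    show "\<exists>p. \<bar>t - t0\<bar> < e \<longrightarrow> P t (fst p) (snd p)"
    proof (cases "\<bar>t - t0\<bar> < e")
      case True
      then obtain a b where "P t a b" using main unfolding P_def by blast
      then show ?thesis by (intro exI[of _ "(a, b)"]) simp
    qed simp
  qed
  from choice[OF this] obtain X where X: "\<And>t. \<bar>t - t0\<bar> < e \<Longrightarrow> P t (fst (X t)) (snd (X t))" by blast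
  have P0: "P t0 \<xi>0 \<eta>0"
    unfolding P_def using assms(6,7,8,9,10) by (simp add: algebra_simps)
  define \<xi>f where "\<xi>f = (\<lambda>t. if t = t0 then \<xi>0 else fst (X t))"
  define \<eta>f where "\<eta>f = (\<lambda>t. if t = t0 then \<eta>0 else snd (X t))"
  have "\<bar>t - t0\<bar> < e \<Longrightarrow> P t (\<xi>f t) (\<eta>f t)" for t
    using X P0 unfolding \<xi>f_def \<eta>f_def by auto
  then show ?thesis using e(1) unfolding P_def
    by (intro exI[of _ e] conjI exI[of _ \<xi>f] exI[of _ \<eta>f]) (auto simp: \<xi>f_def \<eta>f_def)
qed

end
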